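(* Let $\Phi$ be the closure $cl(\varphi_0)$ of a formula, $M^*$ the canonical model for $\Phi$, and $\Gamma,\Delta\in W^*$. If the formula $\bigwedge\Gamma\wedge\neg[\approx]_iI_i\neg\bigwedge\Delta$ is consistent (i.e. its negation is not provable in $\mathbf{AIL}$), then $(\Gamma,\Delta)\in\sim_i^*\circ\approx_i^*$.
   Context: $\mathcal{L}_{AIL}$: $\varphi::=p\mid\neg\varphi\mid\varphi\wedge\varphi\mid A_i\varphi\mid I_i\varphi\mid E_i\varphi\mid[\approx]_i\varphi\mid[\circ^+]_i\varphi$ (countable atoms, finite agent set). Hilbert system $\mathbf{AIL}$: axioms — propositional tautologies; $A_i\varphi\leftrightarrow A_i\neg\varphi$; $A_i(\varphi\wedge\psi)\leftrightarrow A_i\varphi\wedge A_i\psi$; $A_i\varphi\leftrightarrow A_iO_j\varphi$ for $O_j\in\{A_j,I_j,[\approx]_j,[\circ^+]_j,E_j\}$; $A_i\varphi\to I_iA_i\varphi$; $\neg A_i\varphi\to I_i\neg A_i\varphi$; $A_ip\wedge p\to[\approx]_ip$; for $\Box\in\{I_i,[\approx]_i\}$: $\Box(\varphi\to\psi)\to(\Box\varphi\to\Box\psi)$, $\Box\varphi\to\varphi$, $\neg\Box\varphi\to\Box\neg\Box\varphi$; $[\circ^+]_i(\varphi\to\psi)\to([\circ^+]_i\varphi\to[\circ^+]_i\psi)$; $[\circ^+]_i\varphi\to\varphi\wedge[\approx]_iI_i[\circ^+]_i\varphi$; $[\circ^+]_i(\varphi\to[\approx]_iI_i\varphi)\to(\varphi\to[\circ^+]_i\varphi)$;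 $E_i\varphi\leftrightarrow A_i\varphi\wedge[\circ^+]_i\varphi$; rules: modus ponens, necessitation for $I_i,[\approx]_i,[\circ^+]_i$. $\Gamma\vdash\varphi$ iff $\vdash\bigwedge\Gamma'\to\varphi$ for some finite $\Gamma'\subseteq\Gamma$. $cl(\varphi_0)$ is the smallest (finite) set containing $\varphi_0$ closed under: subformulas; $\neg\psi$ for non-negations $\psi$; $A_i\psi\Rightarrow A_i\chi$ for subformulas $\chi$ of $\psi$; $A_i\psi\Rightarrow I_iA_i\psi,I_i\neg A_i\psi,[\approx]_ip$ for atoms $p$ in $\psi$; $I_i\psi\Rightarrow I_iI_i\psi,I_i\neg I_i\psi$ unless $\psi$ is $I_i\chi$ or $\neg I_i\chi$; analogously for $[\approx]_i$; $[\circ^+]_i\psi\Rightarrow[\approx]_iI_i[\circ^+]_i\psi$; $E_i\psi\Rightarrow A_i\psi,[\circ^+]_i\psi$. $W^*$ is the set of maximal consistent sets in $\Phi$ (subsets $\Gamma\subseteq\Phi$ with $\Gamma\nvdash\bot$ not properly extendable within $\Phi$); $\bigwedge\Gamma$ is the conjunction of the (finitely many) elements of $\Gamma$. $(\Gamma,\Delta)\in\sim_i^*$ iff $\{\psi:I_i\psi\in\Gamma\}\subseteq\Delta$; $(\Gamma,\Delta)\in\approx_i^*$ iff $\{\psi:[\approx]_i\psi\in\Gamma\}\subseteq\Delta$; $\sim_i^*\circ\approx_i^*=\{(\Gamma,\Delta):\exists\Theta\in W^*\,((\Gamma,\Theta)\in\approx_i^*,(\Theta,\Delta)\in\sim_i^*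 )\}$. *)

theory Defs
  imports Main "HOL-Library.Countable"
begin

text \<open>Atoms of type 'p (countable), agents of type 'i (finite).
  Aw i = A_i (awareness), Ik i = I_i (implicit knowledge), Ek i = E_i (explicit knowledge),
  Ind i = [\<approx>]_i, Cl i = [\<circ>+]_i.\<close>

datatype ('p, 'i) fm =
    Atom 'p
  | Neg "('p, 'i) fm"
  | Conj "('p, 'i) fm" "('p, 'i) fm"
  | Aw 'i "('p, 'i) fm"
  | Ik 'i "('p, 'i) fm"
  | Ek 'i "('p, 'i) fm"
  | Ind 'i "('p, 'i) fm"
  | Cl 'i "('p, 'i) fm"

abbreviation Disj :: "('p,'i) fm \<Rightarrow> ('p,'i) fm \<Rightarrow> ('p,'i) fm" where
  "Disj a b \<equiv> Neg (Conj (Neg a) (Neg b))"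

abbreviation Imp :: "('p,'i) fm \<Rightarrow> ('p,'i) fm \<Rightarrow> ('p,'i) fm" where
  "Imp a b \<equiv> Neg (Conj a (Neg b))"

abbreviation Iff :: "('p,'i) fm \<Rightarrow> ('p,'i) fm \<Rightarrow> ('p,'i) fm" where
  "Iff a b \<equiv> Conj (Imp a b) (Imp b a)"

definition Bot :: "('p,'i) fm" where
  "Bot = Conj (Atom undefined) (Neg (Atom undefined))"

definition Top :: "('p,'i) fm" where
  "Top = Neg Bot"

text \<open>Propositional evaluation: all non-boolean formulas (atoms and modal formulas)
  are treated as propositional letters.\<close>
fun peval :: "(('p,'i) fm \<Rightarrow> bool) \<Rightarrow> ('p,'i) fm \<Rightarrow> bool" where
  "peval v (Neg a) = (\<not> peval v a)"
| "peval v (Conj a b) = (peval v a \<and> peval v b)"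
| "peval v f = v f"

definition tautology :: "('p,'i) fm \<Rightarrow> bool" where
  "tautology f \<longleftrightarrow> (\<forall>v. peval v f)"

inductive AIL :: "('p,'i) fm \<Rightarrow> bool" where
  taut: "tautology f \<Longrightarrow> AIL f"
| aw_neg: "AIL (Iff (Aw i f) (Aw i (Neg f)))"
| aw_conj: "AIL (Iff (Aw i (Conj f g)) (Conj (Aw i f) (Aw i g)))"
| aw_Aw: "AIL (Iff (Aw i f) (Aw i (Aw j f)))"
| aw_Ik: "AIL (Iff (Aw i f) (Aw i (Ik j f)))"
| aw_Ind: "AIL (Iff (Aw i f) (Aw i (Ind j f)))"
| aw_Cl: "AIL (Iff (Aw i f) (Aw i (Cl j f)))"
| aw_Ek: "AIL (Iff (Aw i f) (Aw i (Ek j f)))"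
| aw_intro: "AIL (Imp (Aw i f) (Ik i (Aw i f)))"
| naw_intro: "AIL (Imp (Neg (Aw i f)) (Ik i (Neg (Aw i f))))"
| aw_atom_ind: "AIL (Imp (Conj (Aw i (Atom p)) (Atom p)) (Ind i (Atom p)))"
| K_Ik: "AIL (Imp (Ik i (Imp f g)) (Imp (Ik i f) (Ik i g)))"
| T_Ik: "AIL (Imp (Ik i f) f)"
| B5_Ik: "AIL (Imp (Neg (Ik i f)) (Ik i (Neg (Ik i f))))"
| K_Ind: "AIL (Imp (Ind i (Imp f g)) (Imp (Ind i f) (Ind i g)))"
| T_Ind: "AIL (Imp (Ind i f) f)"
| B5_Ind: "AIL (Imp (Neg (Ind i f)) (Ind i (Neg (Ind i f))))"
| K_Cl: "AIL (Imp (Cl i (Imp f g)) (Imp (Cl i f) (Cl i g)))"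
| mix_Cl: "AIL (Imp (Cl i f) (Conj f (Ind i (Ik i (Cl i f)))))"
| ind_Cl: "AIL (Imp (Cl i (Imp f (Ind i (Ik i f)))) (Imp f (Cl i f)))"
| def_Ek: "AIL (Iff (Ek i f) (Conj (Aw i f) (Cl i f)))"
| mp: "AIL (Imp f g) \<Longrightarrow> AIL f \<Longrightarrow> AIL g"
| nec_Ik: "AIL f \<Longrightarrow> AIL (Ik i f)"
| nec_Ind: "AIL f \<Longrightarrow> AIL (Ind i f)"
| nec_Cl: "AIL f \<Longrightarrow> AIL (Cl i f)"

fun conj_list :: "('p,'i) fm list \<Rightarrow> ('p,'i) fm" where
  "conj_list [] = Top"
| "conj_list [f] = f"
| "conj_list (f # fs) = Conj f (conj_list fs)"

definition bigconj :: "('p,'i) fm set \<Rightarrow> ('p,'i) fm" where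
  "bigconj G = conj_list (SOME L. set L = G \<and> distinct L)"

definition derives :: "('p,'i) fm set \<Rightarrow> ('p,'i) fm \<Rightarrow> bool" where
  "derives G f \<longleftrightarrow> (\<exists>G'. finite G' \<and> G' \<subseteq> G \<and> AIL (Imp (bigconj G') f))"

definition consistent :: "('p,'i) fm set \<Rightarrow> bool" where
  "consistent G \<longleftrightarrow> \<not> derives G Bot"

fun sub :: "('p,'i) fm \<Rightarrow> ('p,'i) fm set" where
  "sub (Atom p) = {Atom p}"
| "sub (Neg f) = insert (Neg f) (sub f)"
| "sub (Conj f g) = insert (Conj f g) (sub f \<union> sub g)"
| "sub (Aw i f) = insert (Aw i f) (sub f)"
| "sub (Ik i f) = insert (Ik i f) (sub f)"
| "sub (Ek i f) = insert (Ek i f) (sub f)"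
| "sub (Ind i f) = insert (Ind i f) (sub f)"
| "sub (Cl i f) = insert (Cl i f) (sub f)"

fun atoms :: "('p,'i) fm \<Rightarrow> 'p set" where
  "atoms (Atom p) = {p}"
| "atoms (Neg f) = atoms f"
| "atoms (Conj f g) = atoms f \<union> atoms g"
| "atoms (Aw i f) = atoms f"
| "atoms (Ik i f) = atoms f"
| "atoms (Ek i f) = atoms f"
| "atoms (Ind i f) = atoms f"
| "atoms (Cl i f) = atoms f"

fun is_neg :: "('p,'i) fm \<Rightarrow> bool" where
  "is_neg (Neg f) = True"
| "is_neg _ = False"

inductive_set cl :: "('p,'i) fm \<Rightarrow> ('p,'i) fm set" for f0 :: "('p,'i) fm" where
  base: "f0 \<in> cl f0"
| subf: "f \<in> cl f0 \<Longrightarrow> g \<in> sub f \<Longrightarrow> g \<in> cl f0"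
| neg: "f \<in> cl f0 \<Longrightarrow> \<not> is_neg f \<Longrightarrow> Neg f \<in> cl f0"
| aw_sub: "Aw i f \<in> cl f0 \<Longrightarrow> g \<in> sub f \<Longrightarrow> Aw i g \<in> cl f0"
| aw_ik: "Aw i f \<in> cl f0 \<Longrightarrow> Ik i (Aw i f) \<in> cl f0"
| aw_ikn: "Aw i f \<in> cl f0 \<Longrightarrow> Ik i (Neg (Aw i f)) \<in> cl f0"
| aw_ind: "Aw i f \<in> cl f0 \<Longrightarrow> p \<in> atoms f \<Longrightarrow> Ind i (Atom p) \<in> cl f0"
| ik_ik: "Ik i f \<in> cl f0 \<Longrightarrow> \<not> (\<exists>g. f = Ik i g \<or> f = Neg (Ik i g))
          \<Longrightarrow> Ik i (Ik i f) \<in> cl f0"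
| ik_ikn: "Ik i f \<in> cl f0 \<Longrightarrow> \<not> (\<exists>g. f = Ik i g \<or> f = Neg (Ik i g))
          \<Longrightarrow> Ik i (Neg (Ik i f)) \<in> cl f0"
| ind_ind: "Ind i f \<in> cl f0 \<Longrightarrow> \<not> (\<exists>g. f = Ind i g \<or> f = Neg (Ind i g))
          \<Longrightarrow> Ind i (Ind i f) \<in> cl f0"
| ind_indn: "Ind i f \<in> cl f0 \<Longrightarrow> \<not> (\<exists>g. f = Ind i g \<or> f = Neg (Ind i g))
          \<Longrightarrow> Ind i (Neg (Ind i f)) \<in> cl f0"
| cl_ind: "Cl i f \<in> cl f0 \<Longrightarrow> Ind i (Ik i (Cl i f)) \<in> cl f0"
| ek_aw: "Ek i f \<in> cl f0 \<Longrightarrow> Aw i f \<in> cl f0"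
| ek_cl: "Ek i f \<in> cl f0 \<Longrightarrow> Cl i f \<in> cl f0"

definition Wstar :: "('p,'i) fm set \<Rightarrow> ('p,'i) fm set set" where
  "Wstar Phi = {G. G \<subseteq> Phi \<and> consistent G \<and>
                   (\<forall>G'. G \<subset> G' \<and> G' \<subseteq> Phi \<longrightarrow> \<not> consistent G')}"

definition sim_star :: "('p,'i) fm set \<Rightarrow> 'i \<Rightarrow> (('p,'i) fm set \<times> ('p,'i) fm set) set" where
  "sim_star Phi i = {(G, D). G \<in> Wstar Phi \<and> D \<in> Wstar Phi \<and> {f. Ik i f \<in> G} \<subseteq> D}"

definition ind_star :: "('p,'i) fm set \<Rightarrow> 'i \<Rightarrow> (('p,'i) fm set \<times> ('p,'i) fm set) set" where
  "ind_star Phi i = {(G, D). G \<in> Wstar Phi \<and> D \<in> Wstar Phi \<and> {f. Ind i f \<in> G} \<subseteq> D}"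

text \<open>sim_i* \<circ> ind_i*: first an ind step, then a sim step.\<close>
definition comp_star :: "('p,'i) fm set \<Rightarrow> 'i \<Rightarrow> (('p,'i) fm set \<times> ('p,'i) fm set) set" where
  "comp_star Phi i = {(G, D). \<exists>T \<in> Wstar Phi. (G, T) \<in> ind_star Phi i \<and> (T, D) \<in> sim_star Phi i}"

end

theory Submission
  imports Defs
begin


lemma sub_self: "f \<in> sub f"
  by (cases f) auto

lemma sub_trans: "g \<in> sub f \<Longrightarrow> h \<in> sub g \<Longrightarrow> h \<in> sub f"
  by (induction f) auto

lemma finite_sub: "finite (sub f)"
  by (induction f) auto

lemma sub_size: "g \<in> sub f \<Longrightarrow> size g \<le> size f"
  by (induction f) auto

lemma sub_atoms: "g \<in> sub f \<Longrightarrow> atoms g \<subseteq> atoms f"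
  by (induction f) auto

lemma atom_sub: "p \<in> atoms f \<Longrightarrow> Atom p \<in> sub f"
  by (induction f) auto

definition SB :: "nat \<Rightarrow> 'p set \<Rightarrow> ('p,'i) fm set" where
  "SB n P = {f. size f \<le> n \<and> atoms f \<subseteq> P}"

lemma finite_SB:
  assumes "finite P"
  shows "finite (SB n P :: ('p,'i::finite) fm set)"
proof (induction n)
  case 0
  have "SB 0 P \<subseteq> (Atom ` P :: ('p,'i) fm set)"
  proof
    fix f :: "('p,'i) fm" assume "f \<in> SB 0 P" then show "f \<in> Atom ` P"
      by (cases f) (auto simp: SB_def)
  qed
  then show ?case using assms finite_subset by blast
next
  case (Suc n)
  let ?S = "SB n P :: ('p,'i) fm set"
  have "SB (Suc n) P \<subseteq> Atom ` P \<union> Neg ` ?S \<union> (\<lambda>(a,b). Conj a b) ` (?S \<times> ?S)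
     \<union> (\<lambda>(i,f). Aw i f) ` (UNIV \<times> ?S) \<union> (\<lambda>(i,f). Ik i f) ` (UNIV \<times> ?S)
     \<union> (\<lambda>(i,f). Ek i f) ` (UNIV \<times> ?S) \<union> (\<lambda>(i,f). Ind i f) ` (UNIV \<times> ?S)
     \<union> (\<lambda>(i,f). Cl i f) ` (UNIV \<times> ?S)"
  proof
    fix f :: "('p,'i) fm" assume "f \<in> SB (Suc n) P" then show "f \<in> Atom ` P \<union> Neg ` ?S \<union> (\<lambda>(a,b). Conj a b) ` (?S \<times> ?S)
     \<union> (\<lambda>(i,f). Aw i f) ` (UNIV \<times> ?S) \<union> (\<lambda>(i,f). Ik i f) ` (UNIV \<times> ?S)
     \<union> (\<lambda>(i,f). Ek i f) ` (UNIV \<times> ?S) \<union> (\<lambda>(i,f). Ind i f) ` (UNIV \<times> ?S)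
     \<union> (\<lambda>(i,f). Cl i f) ` (UNIV \<times> ?S)"
      by (cases f) (auto simp: SB_def image_iff)
  qed
  moreover have "finite (Atom ` P \<union> Neg ` ?S \<union> (\<lambda>(a,b). Conj a b) ` (?S \<times> ?S)
     \<union> (\<lambda>(i,f). Aw i f) ` (UNIV \<times> ?S) \<union> (\<lambda>(i,f). Ik i f) ` (UNIV \<times> ?S)
     \<union> (\<lambda>(i,f). Ek i f) ` (UNIV \<times> ?S) \<union> (\<lambda>(i,f). Ind i f) ` (UNIV \<times> ?S)
     \<union> (\<lambda>(i,f). Cl i f) ` (UNIV \<times> ?S))"
    using Suc assms by auto
  ultimately show ?case using finite_subset by blast
qed

definition Y0 :: "('p,'i) fm \<Rightarrow> ('p,'i) fm set" where
  "Y0 f0 = sub f0 \<union> {Aw i f |i f. Ek i f \<in> sub f0} \<union> {Cl i f |i f. Ek i f \<in> sub f0}"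

definition Y2 :: "('p,'i) fm \<Rightarrow> ('p,'i) fm set" where
  "Y2 f0 = Y0 f0 \<union> {Aw i g |i f g. Aw i f \<in> Y0 f0 \<and> g \<in> sub f}"

definition Y3 :: "('p,'i) fm \<Rightarrow> ('p,'i) fm set" where
  "Y3 f0 = Y2 f0 \<union> {Ik i (Aw i g) |i g. Aw i g \<in> Y2 f0}
     \<union> {Ik i (Neg (Aw i g)) |i g. Aw i g \<in> Y2 f0} \<union> {Neg (Aw i g) |i g. Aw i g \<in> Y2 f0}
     \<union> {Ind i (Atom p) |i p. p \<in> atoms f0}
     \<union> {Ind i (Ik i (Cl i g)) |i g. Cl i g \<in> Y2 f0} \<union> {Ik i (Cl i g) |i g. Cl i g \<in> Y2 f0}"

definition Y4 :: "('p,'i) fm \<Rightarrow> ('p,'i) fm set" where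
  "Y4 f0 = Y3 f0 \<union> {Ik i (Ik i g) |i g. Ik i g \<in> Y3 f0}
     \<union> {Ik i (Neg (Ik i g)) |i g. Ik i g \<in> Y3 f0} \<union> {Neg (Ik i g) |i g. Ik i g \<in> Y3 f0}
     \<union> {Ind i (Ind i g) |i g. Ind i g \<in> Y3 f0}
     \<union> {Ind i (Neg (Ind i g)) |i g. Ind i g \<in> Y3 f0} \<union> {Neg (Ind i g) |i g. Ind i g \<in> Y3 f0}"

definition XX :: "('p,'i) fm \<Rightarrow> ('p,'i) fm set" where
  "XX f0 = Y4 f0 \<union> Neg ` Y4 f0"

lemma Y0_sub: "h \<in> Y0 f0 \<Longrightarrow> g \<in> sub h \<Longrightarrow> g \<in> Y0 f0"
  unfolding Y0_def
  apply (auto dest: sub_trans)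
  apply (metis sub.simps(6) UnI2 insertCI sub_trans)+
  done

lemma Y2_sub: "h \<in> Y2 f0 \<Longrightarrow> g \<in> sub h \<Longrightarrow> g \<in> Y2 f0"
  unfolding Y2_def
  apply (auto dest: Y0_sub)
  apply (metis Y0_sub sub.simps(4) insertCI sub_trans)
  done

lemma Y2_subA: "Aw i x \<in> Y2 f0 \<Longrightarrow> g \<in> sub x \<Longrightarrow> g \<in> Y2 f0"
  by (rule Y2_sub[of "Aw i x"]) auto
lemma Y2_subC: "Cl i x \<in> Y2 f0 \<Longrightarrow> g \<in> sub x \<Longrightarrow> g \<in> Y2 f0"
  by (rule Y2_sub[of "Cl i x"]) auto
lemma Y2_atom: "p \<in> atoms f0 \<Longrightarrow> Atom p \<in> Y2 f0"
  by (simp add: Y2_def Y0_def atom_sub)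

lemma Y3_sub: "h \<in> Y3 f0 \<Longrightarrow> g \<in> sub h \<Longrightarrow> g \<in> Y3 f0"
  unfolding Y3_def
  apply (elim UnE CollectE exE conjE)
  apply (auto dest: Y2_sub Y2_subA Y2_subC simp: sub_self Y2_atom)
  done

lemma Y3_subI: "Ik i x \<in> Y3 f0 \<Longrightarrow> g \<in> sub x \<Longrightarrow> g \<in> Y3 f0"
  by (rule Y3_sub[of "Ik i x"]) auto
lemma Y3_subN: "Ind i x \<in> Y3 f0 \<Longrightarrow> g \<in> sub x \<Longrightarrow> g \<in> Y3 f0"
  by (rule Y3_sub[of "Ind i x"]) auto

lemma Y4_sub: "h \<in> Y4 f0 \<Longrightarrow> g \<in> sub h \<Longrightarrow> g \<in> Y4 f0"
  unfolding Y4_def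
  apply (elim UnE CollectE exE conjE)
  apply (auto dest: Y3_sub Y3_subI Y3_subN simp: sub_self)
  done

lemma Ek_bound: "Ek i f \<in> sub f0 \<Longrightarrow> size (Aw i f) \<le> size f0 \<and> atoms (Aw i f) \<subseteq> atoms f0
   \<and> size (Cl i f) \<le> size f0 \<and> atoms (Cl i f) \<subseteq> atoms f0"
  using sub_size[of "Ek i f" f0] sub_atoms[of "Ek i f" f0] by simp

lemma Y0_bound: "h \<in> Y0 f0 \<Longrightarrow> size h \<le> size f0 \<and> atoms h \<subseteq> atoms f0"
  unfolding Y0_def
  apply (elim UnE CollectE exE conjE)
  subgoal by (simp add: sub_size sub_atoms)
  subgoal for i f using Ek_bound[of i f f0] by simp
  subgoal for i f using Ek_bound[of i f f0] by simp
  done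

lemma Y2_bound: "h \<in> Y2 f0 \<Longrightarrow> size h \<le> size f0 \<and> atoms h \<subseteq> atoms f0"
  unfolding Y2_def
  apply (elim UnE CollectE exE conjE)
  subgoal by (erule Y0_bound)
  subgoal for i f g using Y0_bound[of "Aw i f" f0] sub_size[of g f] sub_atoms[of g f] by auto
  done

lemma Y3_bound: "h \<in> Y3 f0 \<Longrightarrow> size h \<le> size f0 + 2 \<and> atoms h \<subseteq> atoms f0"
  unfolding Y3_def
  apply (elim UnE CollectE exE conjE)
  subgoal using Y2_bound[of h f0] by simp
  subgoal for i g using Y2_bound[of "Aw i g" f0] by simp
  subgoal for i g using Y2_bound[of "Aw i g" f0] by simp
  subgoal for i g using Y2_bound[of "Aw i g" f0] by simp
  subgoal for i p by simp
  subgoal for i g using Y2_bound[of "Cl i g" f0] by simp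
  subgoal for i g using Y2_bound[of "Cl i g" f0] by simp
  done

lemma Y4_bound: "h \<in> Y4 f0 \<Longrightarrow> size h \<le> size f0 + 4 \<and> atoms h \<subseteq> atoms f0"
  unfolding Y4_def
  apply (elim UnE CollectE exE conjE)
  subgoal using Y3_bound[of h f0] by simp
  subgoal for i g using Y3_bound[of "Ik i g" f0] by simp
  subgoal for i g using Y3_bound[of "Ik i g" f0] by simp
  subgoal for i g using Y3_bound[of "Ik i g" f0] by simp
  subgoal for i g using Y3_bound[of "Ind i g" f0] by simp
  subgoal for i g using Y3_bound[of "Ind i g" f0] by simp
  subgoal for i g using Y3_bound[of "Ind i g" f0] by simp
  done

lemma finite_XX: "finite (XX (f0 :: ('p,'i::finite) fm))"
proof -
  have "XX f0 \<subseteq> SB (size f0 + 5) (atoms f0)"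
    unfolding XX_def SB_def
  proof (intro subsetI CollectI)
    fix h assume "h \<in> Y4 f0 \<union> Neg ` Y4 f0"
    then show "size h \<le> size f0 + 5 \<and> atoms h \<subseteq> atoms f0"
    proof
      assume "h \<in> Y4 f0" then show ?thesis using Y4_bound[of h f0] by simp
    next
      assume "h \<in> Neg ` Y4 f0" then obtain g where "g \<in> Y4 f0" "h = Neg g" by blast
      then show ?thesis using Y4_bound[of g f0] by simp
    qed
  qed
  moreover have "finite (atoms f0)" by (induction f0) auto
  ultimately show ?thesis using finite_SB finite_subset by blast
qed

lemma XX_Aw: "Aw i f \<in> XX f0 \<Longrightarrow> Aw i f \<in> Y2 f0"
  unfolding XX_def Y4_def Y3_def by (auto simp only: Un_iff image_iff mem_Collect_eq fm.distinct fm.inject simp_thms ex_simps)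
lemma XX_Cl: "Cl i f \<in> XX f0 \<Longrightarrow> Cl i f \<in> Y2 f0"
  unfolding XX_def Y4_def Y3_def by (auto simp only: Un_iff image_iff mem_Collect_eq fm.distinct fm.inject simp_thms ex_simps)
lemma XX_Ek: "Ek i f \<in> XX f0 \<Longrightarrow> Ek i f \<in> sub f0"
  unfolding XX_def Y4_def Y3_def Y2_def Y0_def by (auto simp only: Un_iff image_iff mem_Collect_eq fm.distinct fm.inject simp_thms ex_simps)
lemma XX_Ik: "Ik i f \<in> XX f0 \<Longrightarrow> \<not> (\<exists>g. f = Ik i g \<or> f = Neg (Ik i g)) \<Longrightarrow> Ik i f \<in> Y3 f0"
  unfolding XX_def Y4_def by (auto simp only: Un_iff image_iff mem_Collect_eq fm.distinct fm.inject simp_thms ex_simps)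
lemma XX_Ind: "Ind i f \<in> XX f0 \<Longrightarrow> \<not> (\<exists>g. f = Ind i g \<or> f = Neg (Ind i g)) \<Longrightarrow> Ind i f \<in> Y3 f0"
  unfolding XX_def Y4_def by (auto simp only: Un_iff image_iff mem_Collect_eq fm.distinct fm.inject simp_thms ex_simps)
lemma Y2_in_XX: "h \<in> Y2 f0 \<Longrightarrow> h \<in> XX f0"
  unfolding XX_def Y4_def Y3_def by (auto simp only: Un_iff image_iff mem_Collect_eq fm.distinct fm.inject simp_thms ex_simps)
lemma Y3_in_XX: "h \<in> Y3 f0 \<Longrightarrow> h \<in> XX f0"
  unfolding XX_def Y4_def by (auto simp only: Un_iff image_iff mem_Collect_eq fm.distinct fm.inject simp_thms ex_simps)

lemma XX_subf: "f \<in> XX f0 \<Longrightarrow> g \<in> sub f \<Longrightarrow> g \<in> XX f0"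
  unfolding XX_def
proof (elim UnE)
  assume "f \<in> Y4 f0" "g \<in> sub f" then show "g \<in> Y4 f0 \<union> Neg ` Y4 f0" using Y4_sub by blast
next
  assume "f \<in> Neg ` Y4 f0" "g \<in> sub f"
  then obtain h where h: "h \<in> Y4 f0" "f = Neg h" by blast
  then have "g = Neg h \<or> g \<in> sub h" using \<open>g \<in> sub f\<close> by simp
  then show "g \<in> Y4 f0 \<union> Neg ` Y4 f0" using h Y4_sub by blast
qed

lemma XX_neg: "f \<in> XX f0 \<Longrightarrow> \<not> is_neg f \<Longrightarrow> Neg f \<in> XX f0"
  unfolding XX_def
proof (elim UnE)
  assume "f \<in> Neg ` Y4 f0" "\<not> is_neg f" then show "Neg f \<in> Y4 f0 \<union> Neg ` Y4 f0" by auto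
qed blast

lemma Y2_base: "h \<in> sub f0 \<Longrightarrow> h \<in> Y2 f0"
  unfolding Y2_def Y0_def by blast

lemma Y2_aw_sub: "Aw i f \<in> Y2 f0 \<Longrightarrow> g \<in> sub f \<Longrightarrow> Aw i g \<in> Y2 f0"
proof -
  assume a: "Aw i f \<in> Y2 f0" and g: "g \<in> sub f"
  have "\<exists>f'. Aw i f' \<in> Y0 f0 \<and> f \<in> sub f'"
  proof (cases "Aw i f \<in> Y0 f0")
    case True then show ?thesis using sub_self by blast
  next
    case False
    then have "Aw i f \<in> {Aw i g |i f g. Aw i f \<in> Y0 f0 \<and> g \<in> sub f}" using a unfolding Y2_def by simp
    then obtain j f' g' where "Aw i f = Aw j g'" "Aw j f' \<in> Y0 f0" "g' \<in> sub f'" by blast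
    then show ?thesis by auto
  qed
  then obtain f' where "Aw i f' \<in> Y0 f0" "f \<in> sub f'" by blast
  then have "g \<in> sub f'" using g sub_trans by blast
  then have "Aw i g \<in> {Aw i g |i f g. Aw i f \<in> Y0 f0 \<and> g \<in> sub f}" using \<open>Aw i f' \<in> Y0 f0\<close> by blast
  then show ?thesis unfolding Y2_def by simp
qed

lemma cl_XX: "f \<in> cl f0 \<Longrightarrow> f \<in> XX f0"
proof (induction rule: cl.induct)
  case base
  show ?case using Y2_base[OF sub_self] by (rule Y2_in_XX)
next
  case (subf f g)
  show ?case using subf.IH subf.hyps(2) by (rule XX_subf)
next
  case (neg f)
  show ?case using neg.IH neg.hyps(2) by (rule XX_neg)
next
  case (aw_sub i f g)
  have "Aw i f \<in> Y2 f0" using aw_sub.IH by (rule XX_Aw)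
  then have "Aw i g \<in> Y2 f0" using aw_sub.hyps(2) by (rule Y2_aw_sub)
  then show ?case by (rule Y2_in_XX)
next
  case (aw_ik i f)
  have "Aw i f \<in> Y2 f0" using aw_ik.IH by (rule XX_Aw)
  then have "Ik i (Aw i f) \<in> Y3 f0" unfolding Y3_def by blast
  then show ?case by (rule Y3_in_XX)
next
  case (aw_ikn i f)
  have "Aw i f \<in> Y2 f0" using aw_ikn.IH by (rule XX_Aw)
  then have "Ik i (Neg (Aw i f)) \<in> Y3 f0" unfolding Y3_def by blast
  then show ?case by (rule Y3_in_XX)
next
  case (aw_ind i f p)
  have "Aw i f \<in> Y2 f0" using aw_ind.IH by (rule XX_Aw)
  then have "p \<in> atoms f0" using aw_ind.hyps(2) Y2_bound by fastforce
  then have "Ind i (Atom p) \<in> Y3 f0" unfolding Y3_def by blast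
  then show ?case by (rule Y3_in_XX)
next
  case (ik_ik i f)
  have "Ik i f \<in> Y3 f0" using ik_ik.IH ik_ik.hyps(2) by (rule XX_Ik)
  then show ?case unfolding XX_def Y4_def by blast
next
  case (ik_ikn i f)
  have "Ik i f \<in> Y3 f0" using ik_ikn.IH ik_ikn.hyps(2) by (rule XX_Ik)
  then show ?case unfolding XX_def Y4_def by blast
next
  case (ind_ind i f)
  have "Ind i f \<in> Y3 f0" using ind_ind.IH ind_ind.hyps(2) by (rule XX_Ind)
  then show ?case unfolding XX_def Y4_def by blast
next
  case (ind_indn i f)
  have "Ind i f \<in> Y3 f0" using ind_indn.IH ind_indn.hyps(2) by (rule XX_Ind)
  then show ?case unfolding XX_def Y4_def by blast
next
  case (cl_ind i f)
  have "Cl i f \<in> Y2 f0" using cl_ind.IH by (rule XX_Cl)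
  then have "Ind i (Ik i (Cl i f)) \<in> Y3 f0" unfolding Y3_def by blast
  then show ?case by (rule Y3_in_XX)
next
  case (ek_aw i f)
  have "Ek i f \<in> sub f0" using ek_aw.IH by (rule XX_Ek)
  then have "Aw i f \<in> Y2 f0" unfolding Y2_def Y0_def by blast
  then show ?case by (rule Y2_in_XX)
next
  case (ek_cl i f)
  have "Ek i f \<in> sub f0" using ek_cl.IH by (rule XX_Ek)
  then have "Cl i f \<in> Y2 f0" unfolding Y2_def Y0_def by blast
  then show ?case by (rule Y2_in_XX)
qed

lemma finite_cl: "finite (cl (f0 :: ('p,'i::finite) fm))"
proof (rule finite_subset[OF subsetI finite_XX])
  fix x assume "x \<in> cl f0" then show "x \<in> XX f0" by (rule cl_XX)
qed



lemma peval_Bot[simp]: "peval v Bot = False"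
  by (simp add: Bot_def)
lemma peval_Top[simp]: "peval v Top = True"
  by (simp add: Top_def)

lemma peval_conj_list: "peval v (conj_list L) = (\<forall>x\<in>set L. peval v x)"
  by (induction L rule: conj_list.induct) auto

lemma bigconj_list: "finite S \<Longrightarrow> set (SOME L. set L = S \<and> distinct L) = S"
  by (rule conjunct1[OF someI_ex[OF finite_distinct_list]])

lemma peval_bigconj: "finite S \<Longrightarrow> peval v (bigconj S) = (\<forall>x\<in>S. peval v x)"
  unfolding bigconj_def by (simp only: peval_conj_list bigconj_list)

lemma AIL_mp1: "AIL a \<Longrightarrow> tautology (Imp a b) \<Longrightarrow> AIL b"
  by (rule AIL.mp[OF AIL.taut])

lemma AIL_mp2: "AIL a \<Longrightarrow> AIL b \<Longrightarrow> tautology (Imp a (Imp b c)) \<Longrightarrow> AIL c"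
  by (rule AIL.mp[OF AIL.mp[OF AIL.taut]])


lemma AIL_conj_list: "(\<forall>x\<in>set L. AIL x) \<Longrightarrow> AIL (conj_list L)"
proof (induction L rule: conj_list.induct)
  case 1
  then show ?case by (intro AIL.taut) (simp add: tautology_def)
next
  case (2 f)
  then show ?case by simp
next
  case (3 f g fs)
  then have "AIL f" "AIL (conj_list (g # fs))" by auto
  then show ?case by (rule AIL_mp2) (simp add: tautology_def)
qed

lemma AIL_bigconj: "finite S \<Longrightarrow> \<forall>x\<in>S. AIL x \<Longrightarrow> AIL (bigconj S)"
  unfolding bigconj_def by (rule AIL_conj_list) (simp only: bigconj_list)

lemma Ik_mono: "AIL (Imp a b) \<Longrightarrow> AIL (Imp (Ik i a) (Ik i b))"
  by (rule AIL.mp[OF AIL.K_Ik AIL.nec_Ik])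

lemma Ind_mono: "AIL (Imp a b) \<Longrightarrow> AIL (Imp (Ind i a) (Ind i b))"
  by (rule AIL.mp[OF AIL.K_Ind AIL.nec_Ind])

lemma Ind_conj: "AIL (Imp (Conj (Ind i a) (Ind i b)) (Ind i (Conj a b)))"
proof -
  have "AIL (Imp a (Imp b (Conj a b)))" by (intro AIL.taut) (simp add: tautology_def)
  then have 1: "AIL (Imp (Ind i a) (Ind i (Imp b (Conj a b))))" by (rule Ind_mono)
  have 2: "AIL (Imp (Ind i (Imp b (Conj a b))) (Imp (Ind i b) (Ind i (Conj a b))))" by (rule AIL.K_Ind)
  from 1 2 show ?thesis by (rule AIL_mp2) (simp add: tautology_def)
qed

lemma Ind_conj_list: "AIL (Imp (conj_list (map (Ind i) L)) (Ind i (conj_list L)))"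
proof (induction L rule: conj_list.induct)
  case 1
  have "AIL (Top :: ('a,'b) fm)" by (intro AIL.taut) (simp add: tautology_def)
  then have "AIL (Ind i (Top :: ('a,'b) fm))" by (rule AIL.nec_Ind)
  then show ?case by (rule AIL_mp1) (simp add: tautology_def)
next
  case (2 f)
  then show ?case by (intro AIL.taut) (simp add: tautology_def)
next
  case (3 f g fs)
  have c: "AIL (Imp (Conj (Ind i f) (Ind i (conj_list (g # fs)))) (Ind i (Conj f (conj_list (g # fs)))))"
    by (rule Ind_conj)
  from 3 c show ?case by (rule AIL_mp2) (simp add: tautology_def)
qed

lemma Ind_bigconj: "finite A \<Longrightarrow> AIL (Imp (bigconj (Ind i ` A)) (Ind i (bigconj A)))"
proof -
  assume fin: "finite A"
  define L where "L = (SOME L. set L = A \<and> distinct L)"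
  have sL: "set L = A" using bigconj_list[OF fin] L_def by simp
  have bA: "bigconj A = conj_list L" unfolding bigconj_def L_def by simp
  have 1: "AIL (Imp (conj_list (map (Ind i) L)) (Ind i (conj_list L)))" by (rule Ind_conj_list)
  have "tautology (Imp (Imp (conj_list (map (Ind i) L)) (Ind i (conj_list L)))
     (Imp (bigconj (Ind i ` A)) (Ind i (bigconj A))))"
    using fin sL bA by (auto simp: tautology_def peval_bigconj peval_conj_list)
  with 1 show ?thesis by (rule AIL_mp1)
qed

lemma derives_fin: "finite S \<Longrightarrow> derives S f \<Longrightarrow> AIL (Imp (bigconj S) f)"
proof -
  assume fin: "finite S" and "derives S f"
  then obtain S' where S': "finite S'" "S' \<subseteq> S" "AIL (Imp (bigconj S') f)" unfolding derives_def by blast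
  have "tautology (Imp (Imp (bigconj S') f) (Imp (bigconj S) f))"
    using fin S' by (auto simp: tautology_def peval_bigconj)
  with S'(3) show ?thesis by (rule AIL_mp1)
qed

lemma derivesI: "finite S \<Longrightarrow> AIL (Imp (bigconj S) f) \<Longrightarrow> derives S f"
  unfolding derives_def by blast

lemma lindenbaum:
  assumes fin: "finite Phi" and sub: "S \<subseteq> Phi" and con: "consistent S"
  shows "\<exists>M \<in> Wstar Phi. S \<subseteq> M"
proof -
  let ?F = "{T. S \<subseteq> T \<and> T \<subseteq> Phi \<and> consistent T}"
  have "?F \<subseteq> Pow Phi" by blast
  moreover have "finite (Pow Phi)" using fin by simp
  ultimately have "finite ?F" by (rule finite_subset)
  moreover have "S \<in> ?F" using sub con by simp
  ultimately have "\<exists>m\<in>?F. S \<le> m \<and> (\<forall>b\<in>?F. m \<le> b \<longrightarrow> m = b)"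
    by (rule finite_has_maximal2)
  then obtain m where m: "m \<in> ?F" "\<forall>b\<in>?F. m \<le> b \<longrightarrow> m = b"
    by blast
  have "m \<in> Wstar Phi"
    unfolding Wstar_def
  proof (intro CollectI conjI allI impI)
    show "m \<subseteq> Phi" "consistent m" using m(1) by auto
  next
    fix G' assume G': "m \<subset> G' \<and> G' \<subseteq> Phi"
    show "\<not> consistent G'"
    proof
      assume "consistent G'"
      moreover have "S \<subseteq> G'" using G' m(1) by auto
      ultimately have "G' \<in> ?F" using G' by simp
      moreover have "m \<le> G'" using G' by auto
      ultimately have "m = G'" using m(2) by blast
      then show False using G' by simp
    qed
  qed
  then show ?thesis using m(1) by blast
qed

lemma Wstar_finite: "finite Phi \<Longrightarrow> M \<in> Wstar Phi \<Longrightarrow> finite M"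
proof -
  assume fin: "finite Phi" and "M \<in> Wstar Phi"
  then have "M \<subseteq> Phi" by (simp add: Wstar_def)
  then show "finite M" using fin by (rule finite_subset)
qed

lemma Wstar_notin:
  assumes fin: "finite Phi" and M: "M \<in> Wstar Phi" and x: "x \<in> Phi" "x \<notin> M"
  shows "AIL (Imp x (Neg (bigconj M)))"
proof -
  have fM: "finite M" using Wstar_finite fin M by blast
  have Mphi: "M \<subseteq> Phi" and max: "\<forall>G'. M \<subset> G' \<and> G' \<subseteq> Phi \<longrightarrow> \<not> consistent G'"
    using M by (simp_all add: Wstar_def)
  have "M \<subset> insert x M" using x(2) by auto
  moreover have "insert x M \<subseteq> Phi" using x(1) Mphi by simp
  ultimately have "\<not> consistent (insert x M)" using max by blast
  then have "derives (insert x M) Bot" unfolding consistent_def by simp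
  then have "AIL (Imp (bigconj (insert x M)) Bot)" using fM by (intro derives_fin) simp_all
  moreover have "tautology (Imp (Imp (bigconj (insert x M)) Bot) (Imp x (Neg (bigconj M))))"
    using fM by (auto simp: tautology_def peval_bigconj)
  ultimately show ?thesis by (rule AIL_mp1)
qed



lemma sub_cl: "Ik i x \<in> cl f0 \<Longrightarrow> x \<in> cl f0"
  by (rule cl.subf) (auto simp: sub_self)
lemma sub_cl2: "Ind i x \<in> cl f0 \<Longrightarrow> x \<in> cl f0"
  by (rule cl.subf) (auto simp: sub_self)

theorem lemma10:
  fixes f0 :: "('p::countable, 'i::finite) fm" and i :: 'i
    and G D :: "('p, 'i) fm set"
  assumes "G \<in> Wstar (cl f0)" and "D \<in> Wstar (cl f0)"
    and "\<not> AIL (Neg (Conj (bigconj G) (Neg (Ind i (Ik i (Neg (bigconj D)))))))"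
  shows "(G, D) \<in> comp_star (cl f0) i"
proof -
  let ?Phi = "cl f0"
  have finP: "finite ?Phi" by (rule finite_cl)
  have GW: "G \<in> Wstar ?Phi" and DW: "D \<in> Wstar ?Phi" using assms by simp_all
  have finG: "finite G" using finP GW by (rule Wstar_finite)
  have finD: "finite D" using finP DW by (rule Wstar_finite)
  have GP: "G \<subseteq> ?Phi" using GW by (simp add: Wstar_def)
  define A where "A = {x. Ind i x \<in> G}"
  define N where "N = {x. Ik i x \<in> ?Phi \<and> x \<notin> D}"
  define T0 where "T0 = A \<union> (\<lambda>x. Neg (Ik i x)) ` N"
  define dl where "dl = Ik i (Neg (bigconj D))"
  have AP: "A \<subseteq> ?Phi"
  proof
    fix x assume "x \<in> A" then have "Ind i x \<in> ?Phi" unfolding A_def using GP by auto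
    then show "x \<in> ?Phi" by (rule sub_cl2)
  qed
  have NP: "N \<subseteq> ?Phi"
  proof
    fix x assume "x \<in> N" then have "Ik i x \<in> ?Phi" unfolding N_def by auto
    then show "x \<in> ?Phi" by (rule sub_cl)
  qed
  have negP: "(\<lambda>x. Neg (Ik i x)) ` N \<subseteq> ?Phi"
  proof
    fix y assume "y \<in> (\<lambda>x. Neg (Ik i x)) ` N"
    then obtain x where "x \<in> N" "y = Neg (Ik i x)" by blast
    then have "Ik i x \<in> ?Phi" unfolding N_def by simp
    then have "Neg (Ik i x) \<in> ?Phi" by (rule cl.neg) simp
    then show "y \<in> ?Phi" using \<open>y = Neg (Ik i x)\<close> by simp
  qed
  have T0P: "T0 \<subseteq> ?Phi" unfolding T0_def using AP negP by blast
  have finA: "finite A" using finP AP by (rule finite_subset[rotated])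
  have finN: "finite N" using finP NP by (rule finite_subset[rotated])
  have finT0: "finite T0" using finP T0P by (rule finite_subset[rotated])
  have cons: "consistent T0"
  proof (rule ccontr)
    assume "\<not> consistent T0"
    then have "derives T0 Bot" unfolding consistent_def by simp
    then have h0: "AIL (Imp (bigconj T0) Bot)" using finT0 by (intro derives_fin) simp_all
    have hN: "AIL (Imp (Ik i x) dl)" if "x \<in> N" for x
    proof -
      have "x \<in> ?Phi" "x \<notin> D" using that NP unfolding N_def by auto
      then have "AIL (Imp x (Neg (bigconj D)))" using finP DW by (intro Wstar_notin) simp_all
      then show ?thesis unfolding dl_def by (rule Ik_mono)
    qed
    define P where "P = insert (Imp (bigconj T0) Bot) ((\<lambda>x. Imp (Ik i x) dl) ` N)"
    have finPP: "finite P" unfolding P_def using finN by simp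
    have "\<forall>y\<in>P. AIL y" unfolding P_def using h0 hN by blast
    then have hP: "AIL (bigconj P)" using finPP by (intro AIL_bigconj) simp_all
    have "tautology (Imp (bigconj P) (Imp (bigconj A) dl))"
      unfolding tautology_def
    proof
      fix v
      show "peval v (Imp (bigconj P) (Imp (bigconj A) dl))"
      proof (cases "peval v dl")
        case True then show ?thesis by simp
      next
        case False
        show ?thesis
        proof (rule ccontr)
          assume "\<not> peval v (Imp (bigconj P) (Imp (bigconj A) dl))"
          then have pP: "\<forall>y\<in>P. peval v y" and pA: "\<forall>y\<in>A. peval v y"
            using finPP finA by (simp_all add: peval_bigconj)
          have "\<forall>x\<in>N. \<not> peval v (Ik i x)"
          proof
            fix x assume "x \<in> N"
            then have "peval v (Imp (Ik i x) dl)" using pP unfolding P_def by blast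
            then show "\<not> peval v (Ik i x)" using False by simp
          qed
          then have "\<forall>y\<in>T0. peval v y" using pA unfolding T0_def by auto
          then have "peval v (bigconj T0)" using finT0 by (simp add: peval_bigconj)
          moreover have "peval v (Imp (bigconj T0) Bot)" using pP unfolding P_def by blast
          ultimately show False by simp
        qed
      qed
    qed
    with hP have h1: "AIL (Imp (bigconj A) dl)" by (rule AIL_mp1)
    then have h2: "AIL (Imp (Ind i (bigconj A)) (Ind i dl))" by (rule Ind_mono)
    have h3: "AIL (Imp (bigconj (Ind i ` A)) (Ind i (bigconj A)))" using finA by (rule Ind_bigconj)
    have sub: "Ind i ` A \<subseteq> G" unfolding A_def by blast
    have finIA: "finite (Ind i ` A)" using finA by simp
    have "tautology (Imp (Imp (bigconj (Ind i ` A)) (Ind i (bigconj A)))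
        (Imp (Imp (Ind i (bigconj A)) (Ind i dl)) (Imp (bigconj G) (Ind i dl))))"
      unfolding tautology_def
    proof
      fix v
      have 1: "peval v (bigconj G) \<longrightarrow> peval v (bigconj (Ind i ` A))"
      proof
        assume "peval v (bigconj G)"
        then have "\<forall>x\<in>G. peval v x" using finG by (simp add: peval_bigconj)
        then have "\<forall>x\<in>Ind i ` A. peval v x" using sub by blast
        then show "peval v (bigconj (Ind i ` A))" using finIA by (simp add: peval_bigconj)
      qed
      then show "peval v (Imp (Imp (bigconj (Ind i ` A)) (Ind i (bigconj A)))
        (Imp (Imp (Ind i (bigconj A)) (Ind i dl)) (Imp (bigconj G) (Ind i dl))))"
        by (simp only: peval.simps) iprover
    qed
    with h3 h2 have "AIL (Imp (bigconj G) (Ind i dl))" by (rule AIL_mp2)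
    then show False using assms(3) unfolding dl_def by simp
  qed
  obtain Th where ThW: "Th \<in> Wstar ?Phi" and T0Th: "T0 \<subseteq> Th"
    using lindenbaum[OF finP T0P cons] by blast
  have finTh: "finite Th" using finP ThW by (rule Wstar_finite)
  have ThP: "Th \<subseteq> ?Phi" using ThW by (simp add: Wstar_def)
  have conTh: "consistent Th" using ThW by (simp add: Wstar_def)
  have "{f. Ind i f \<in> G} \<subseteq> Th" using T0Th unfolding T0_def A_def by auto
  then have ind: "(G, Th) \<in> ind_star ?Phi i" by (simp add: ind_star_def GW ThW)
  have "{f. Ik i f \<in> Th} \<subseteq> D"
  proof
    fix x assume "x \<in> {f. Ik i f \<in> Th}"
    then have x: "Ik i x \<in> Th" by simp
    show "x \<in> D"
    proof (rule ccontr)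
      assume "x \<notin> D"
      moreover have "Ik i x \<in> ?Phi" using x ThP by blast
      ultimately have "x \<in> N" unfolding N_def by simp
      then have "Neg (Ik i x) \<in> Th" using T0Th unfolding T0_def by blast
      then have sub2: "{Ik i x, Neg (Ik i x)} \<subseteq> Th" using x by simp
      have "AIL (Imp (bigconj {Ik i x, Neg (Ik i x)}) Bot)"
        by (intro AIL.taut) (simp add: tautology_def peval_bigconj)
      then have "derives Th Bot" unfolding derives_def using sub2
        by (intro exI[of _ "{Ik i x, Neg (Ik i x)}"] conjI) simp_all
      then show False using conTh unfolding consistent_def by simp
    qed
  qed
  then have sim: "(Th, D) \<in> sim_star ?Phi i" by (simp add: sim_star_def DW ThW)
  show ?thesis unfolding comp_star_def using ThW ind sim by (simp add: bexI[of _ Th])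
qed

end
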